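(* Let $\sigma$ be any one of the DF-QuAD, Quadratic Energy (QE) or Restricted Euler-based (REB) gradual semantics. Then for every acyclic QBAF $\mathcal{Q}=\langle \mathcal{A},\mathcal{R}^-,\mathcal{R}^+,\tau\rangle$, every $\alpha,\beta\in\mathcal{A}$ with $\alpha\neq\beta$ and $\mathcal{R}(\beta)=\{(\beta,\alpha)\}$, and every $\tau':\mathcal{A}\to[0,1]$: (1) if $(\beta,\alpha)\in\mathcal{R}^-$, then $\sigma(\alpha)\le\sigma_{\mathcal{R}\setminus\{(\beta,\alpha)\}}(\alpha)$; (2) if $(\beta,\alpha)\in\mathcal{R}^+$, then $\sigma(\alpha)\ge\sigma_{\mathcal{R}\setminus\{(\beta,\alpha)\}}(\alpha)$; (3) if $(\beta,\alpha)\in\mathcal{R}^-$, $\tau(\beta)\le\tau'(\beta)$ and $\tau(\gamma)=\tau'(\gamma)$ for all $\gamma\in\mathcal{A}\setminus\{\beta\}$, then $\sigma(\alpha)\ge\sigma_{\tau'}(\alpha)$; (4) if $(\beta,\alpha)\in\mathcal{R}^+$, $\tau(\beta)\le\tau'(\beta)$ and $\tau(\gamma)=\tau'(\gamma)$ for all $\gamma\in\mathcal{A}\setminus\{\beta\}$, then $\sigma(\alpha)\le\sigma_{\tau'}(\alpha)$. That is, DF-QuAD, QE and REB satisfy monotonicity on acyclic QBAFs.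
   Context: A QBAF is a quadruple $\mathcal{Q}=\langle\mathcal{A},\mathcal{R}^-,\mathcal{R}^+,\tau\rangle$ with $\mathcal{A}$ a finite set of arguments, $\mathcal{R}^-,\mathcal{R}^+\subseteq\mathcal{A}\times\mathcal{A}$ disjoint attack and support relations, and $\tau:\mathcal{A}\to[0,1]$ a base score function. Write $\mathcal{R}=\mathcal{R}^-\cup\mathcal{R}^+$ and $\mathcal{R}(\beta)=\{(\beta,\gamma)\in\mathcal{R}:\gamma\in\mathcal{A}\}$ for the outgoing edges of $\beta$. A QBAF is acyclic if the directed graph $(\mathcal{A},\mathcal{R})$ has no cycle. For $\mathcal{S}\subseteq\mathcal{R}$, $\mathcal{Q}^{|\mathcal{S}}=\langle\mathcal{A},\mathcal{R}^-\cap\mathcal{S},\mathcal{R}^+\cap\mathcal{S},\tau\rangle$ and $\sigma_{\mathcal{S}}(\alpha)$ is the strength of $\alpha$ in $\mathcal{Q}^{|\mathcal{S}}$; for $\tau':\mathcal{A}\to[0,1]$, $\mathcal{Q}^{|\tau'}=\langle\mathcal{A},\mathcal{R}^-,\mathcal{R}^+,\tau'\rangle$ and $\sigma_{\tau'}(\alpha)$ is the strength of $\alpha$ in $\mathcal{Q}^{|\tau'}$; $\sigma(\alpha)$ is the strength in $\mathcal{Q}$. On an acyclic QBAF the three semantics are defined recursively (following a topological order) as follows. DF-QuAD: with $v_{att}=1-\prod_{(\beta,\alpha)\in\mathcal{R}^-}(1-\sigma(\beta))$ and $v_{sup}=1-\prod_{(\beta,\alpha)\in\mathcal{R}^+}(1-\sigma(\beta))$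 (empty products equal $1$), $\sigma(\alpha)=\tau(\alpha)-\tau(\alpha)(v_{att}-v_{sup})$ if $v_{att}\ge v_{sup}$ and $\sigma(\alpha)=\tau(\alpha)+(1-\tau(\alpha))(v_{sup}-v_{att})$ otherwise. QE: with $E_\alpha=\sum_{(\beta,\alpha)\in\mathcal{R}^+}\sigma(\beta)-\sum_{(\beta,\alpha)\in\mathcal{R}^-}\sigma(\beta)$, $\sigma(\alpha)=\tau(\alpha)-\tau(\alpha)\frac{E_\alpha^2}{1+E_\alpha^2}$ if $E_\alpha\le 0$ and $\sigma(\alpha)=\tau(\alpha)+(1-\tau(\alpha))\frac{E_\alpha^2}{1+E_\alpha^2}$ if $E_\alpha>0$. REB: with the same $E_\alpha$, $\sigma(\alpha)=1-\frac{1-\tau(\alpha)^2}{1+\tau(\alpha)e^{E_\alpha}}$. *)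

theory Defs
  imports Main "HOL-Analysis.Analysis"
begin

definition qbaf :: "'a set \<Rightarrow> ('a \<times> 'a) set \<Rightarrow> ('a \<times> 'a) set \<Rightarrow> ('a \<Rightarrow> real) \<Rightarrow> bool" where
  "qbaf A Att Sp tau \<longleftrightarrow> finite A \<and> Att \<subseteq> A \<times> A \<and> Sp \<subseteq> A \<times> A \<and> Att \<inter> Sp = {}
     \<and> (\<forall>a\<in>A. 0 \<le> tau a \<and> tau a \<le> 1)"

definition acyclic_qbaf :: "'a set \<Rightarrow> ('a \<times> 'a) set \<Rightarrow> ('a \<times> 'a) set \<Rightarrow> ('a \<Rightarrow> real) \<Rightarrow> bool" where
  "acyclic_qbaf A Att Sp tau \<longleftrightarrow> qbaf A Att Sp tau \<and> acyclic (Att \<union> Sp)"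

datatype semantics = DFQuAD | QE | REB

definition attackers :: "'a set \<Rightarrow> ('a \<times> 'a) set \<Rightarrow> 'a \<Rightarrow> 'a set" where
  "attackers A Att a = {b \<in> A. (b, a) \<in> Att}"

definition supporters :: "'a set \<Rightarrow> ('a \<times> 'a) set \<Rightarrow> 'a \<Rightarrow> 'a set" where
  "supporters A Sp a = {b \<in> A. (b, a) \<in> Sp}"

fun update :: "semantics \<Rightarrow> 'a set \<Rightarrow> ('a \<times> 'a) set \<Rightarrow> ('a \<times> 'a) set \<Rightarrow> ('a \<Rightarrow> real)
                 \<Rightarrow> ('a \<Rightarrow> real) \<Rightarrow> 'a \<Rightarrow> real" where
  "update DFQuAD A Att Sp tau s a =
     (let vatt = 1 - (\<Prod>b\<in>attackers A Att a. 1 - s b);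
          vsup = 1 - (\<Prod>b\<in>supporters A Sp a. 1 - s b)
      in if vatt \<ge> vsup then tau a - tau a * (vatt - vsup)
         else tau a + (1 - tau a) * (vsup - vatt))"
| "update QE A Att Sp tau s a =
     (let E = (\<Sum>b\<in>supporters A Sp a. s b) - (\<Sum>b\<in>attackers A Att a. s b)
      in if E \<le> 0 then tau a - tau a * (E\<^sup>2 / (1 + E\<^sup>2))
         else tau a + (1 - tau a) * (E\<^sup>2 / (1 + E\<^sup>2)))"
| "update REB A Att Sp tau s a =
     (let E = (\<Sum>b\<in>supporters A Sp a. s b) - (\<Sum>b\<in>attackers A Att a. s b)
      in 1 - (1 - (tau a)\<^sup>2) / (1 + tau a * exp E))"

text \<open>On an acyclic QBAF this is
exactly the function computed recursively along a topological order.\<close>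
definition strength :: "semantics \<Rightarrow> 'a set \<Rightarrow> ('a \<times> 'a) set \<Rightarrow> ('a \<times> 'a) set \<Rightarrow> ('a \<Rightarrow> real)
                          \<Rightarrow> 'a \<Rightarrow> real" where
  "strength sem A Att Sp tau =
     (THE s. (\<forall>a\<in>A. s a = update sem A Att Sp tau s a) \<and> (\<forall>a. a \<notin> A \<longrightarrow> s a = 0))"

end

theory Submission
  imports Defs
begin


definition dfq :: "real \<Rightarrow> real \<Rightarrow> real \<Rightarrow> real" where
  "dfq t pa ps = (let vatt = 1 - pa; vsup = 1 - ps in if vatt \<ge> vsup then t - t*(vatt - vsup) else t + (1-t)*(vsup - vatt))"
definition qe :: "real \<Rightarrow> real \<Rightarrow> real" where
  "qe t E = (if E \<le> 0 then t - t * (E\<^sup>2 / (1 + E\<^sup>2)) else t + (1 - t) * (E\<^sup>2 / (1 + E\<^sup>2)))"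
definition reb :: "real \<Rightarrow> real \<Rightarrow> real" where
  "reb t E = 1 - (1 - t\<^sup>2) / (1 + t * exp E)"

lemma dfq_mono:
  assumes "0 \<le> t1" "t1 \<le> t2" "t2 \<le> 1" "0 \<le> pa1" "pa1 \<le> pa2" "pa2 \<le> 1"
    "0 \<le> ps2" "ps2 \<le> ps1" "ps1 \<le> 1"
  shows "dfq t1 pa1 ps1 \<le> dfq t2 pa2 ps2"
proof -
  define d1 where "d1 = pa1 - ps1"
  define d2 where "d2 = pa2 - ps2"
  have d: "d1 \<le> d2" "-1 \<le> d1" "d2 \<le> 1" using assms unfolding d1_def d2_def by auto
  have e1: "dfq t1 pa1 ps1 = (if d1 \<le> 0 then t1 * (1 + d1) else 1 - (1 - t1) * (1 - d1))"
    unfolding dfq_def d1_def Let_def by (auto simp: algebra_simps)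
  have e2: "dfq t2 pa2 ps2 = (if d2 \<le> 0 then t2 * (1 + d2) else 1 - (1 - t2) * (1 - d2))"
    unfolding dfq_def d2_def Let_def by (auto simp: algebra_simps)
  show ?thesis
  proof (cases "d1 \<le> 0")
    case True
    then have "t1 * (1 + d1) \<le> t1" using assms by (simp add: mult_left_le)
    show ?thesis
    proof (cases "d2 \<le> 0")
      case True
      have "t1 * (1 + d1) \<le> t2 * (1 + d2)" by (rule mult_mono) (use assms d True in auto)
      then show ?thesis using e1 e2 True \<open>d1 \<le> 0\<close> by simp
    next
      case False
      have "t2 \<le> 1 - (1 - t2) * (1 - d2)" using assms False d
        by (smt (verit) mult_left_le)
      then show ?thesis using e1 e2 False \<open>d1 \<le> 0\<close> \<open>t1 * (1 + d1) \<le> t1\<close> assms by simp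
    qed
  next
    case False
    then have F2: "\<not> d2 \<le> 0" using d by simp
    have "(1 - t2) * (1 - d2) \<le> (1 - t1) * (1 - d1)" by (rule mult_mono) (use assms d in auto)
    then show ?thesis using e1 e2 False F2 by simp
  qed
qed

lemma qe_mono:
  assumes "0 \<le> t1" "t1 \<le> t2" "t2 \<le> 1" "E1 \<le> E2"
  shows "qe t1 E1 \<le> qe t2 E2"
proof -
  have g: "x\<^sup>2 / (1 + x\<^sup>2) = 1 - 1 / (1 + x\<^sup>2)" for x :: real
  proof -
    have "1 + x\<^sup>2 \<noteq> 0" by (smt (verit) zero_le_power2)
    then show ?thesis by (simp add: field_simps)
  qed
  have e: "qe t E = (if E \<le> 0 then t * (1 / (1 + E\<^sup>2)) else 1 - (1 - t) * (1 / (1 + E\<^sup>2)))" for t E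
    unfolding qe_def g by (auto simp: algebra_simps)
  have pos: "0 < 1 / (1 + x\<^sup>2)" "1 / (1 + x\<^sup>2) \<le> 1" for x :: real
    by (auto simp: add_pos_nonneg)
  show ?thesis
  proof (cases "E1 \<le> 0")
    case True
    have "t1 * (1 / (1 + E1\<^sup>2)) \<le> t1 * 1" using pos[of E1] assms by (intro mult_left_mono) auto
    then have A: "t1 * (1 / (1 + E1\<^sup>2)) \<le> t1" by simp
    show ?thesis
    proof (cases "E2 \<le> 0")
      case True
      have "(-E2)*(-E2) \<le> (-E1)*(-E1)" using \<open>E1 \<le> 0\<close> True assms by (intro mult_mono) auto
      then have "E2\<^sup>2 \<le> E1\<^sup>2" by (simp add: power2_eq_square)
      then have "1 / (1 + E1\<^sup>2) \<le> 1 / (1 + E2\<^sup>2)" by (simp add: frac_le add_pos_nonneg)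
      then have "t1 * (1 / (1 + E1\<^sup>2)) \<le> t2 * (1 / (1 + E2\<^sup>2))"
        using assms pos by (intro mult_mono) auto
      then show ?thesis using e True \<open>E1 \<le> 0\<close> by simp
    next
      case False
      have "t2 \<le> 1 - (1 - t2) * (1 / (1 + E2\<^sup>2))" using pos[of E2] assms
        by (smt (verit) mult_left_le)
      then show ?thesis using e False \<open>E1 \<le> 0\<close> A assms by simp
    qed
  next
    case False
    then have F2: "\<not> E2 \<le> 0" using assms by simp
    have "E1\<^sup>2 \<le> E2\<^sup>2" using False assms by (simp add: power2_eq_square mult_mono')
    then have "1 / (1 + E2\<^sup>2) \<le> 1 / (1 + E1\<^sup>2)" by (simp add: frac_le add_pos_nonneg)
    then have "(1 - t2) * (1 / (1 + E2\<^sup>2)) \<le> (1 - t1) * (1 / (1 + E1\<^sup>2))"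
      using assms pos by (intro mult_mono) auto
    then show ?thesis using e False F2 by simp
  qed
qed

lemma reb_mono:
  assumes "0 \<le> t1" "t1 \<le> t2" "t2 \<le> 1" "E1 \<le> E2"
  shows "reb t1 E1 \<le> reb t2 E2"
proof -
  have "t1 * exp E1 \<le> t2 * exp E2" using assms by (intro mult_mono) auto
  moreover have "t1\<^sup>2 \<le> t2\<^sup>2" using assms by (intro power_mono) auto
  moreover have "t2\<^sup>2 \<le> 1" using assms by (simp add: power_le_one)
  moreover have "0 \<le> t1 * exp E1" using assms by simp
  ultimately have "(1 - t2\<^sup>2) / (1 + t2 * exp E2) \<le> (1 - t1\<^sup>2) / (1 + t1 * exp E1)"
    by (intro frac_le) auto
  then show ?thesis unfolding reb_def by simp
qed

lemma dfq_range: assumes "0 \<le> t" "t \<le> 1" "0 \<le> pa" "pa \<le> 1" "0 \<le> ps" "ps \<le> 1"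
  shows "0 \<le> dfq t pa ps \<and> dfq t pa ps \<le> 1"
proof -
  have "dfq 0 0 1 \<le> dfq t pa ps" "dfq t pa ps \<le> dfq 1 1 0"
    by (rule dfq_mono; use assms in simp)+
  then show ?thesis by (simp add: dfq_def)
qed

lemma qe_range: assumes "0 \<le> t" "t \<le> 1" shows "0 \<le> qe t E \<and> qe t E \<le> 1"
proof -
  define G where "G = E\<^sup>2 / (1 + E\<^sup>2)"
  have G: "0 \<le> G" "G \<le> 1" unfolding G_def by (auto simp: add_pos_nonneg)
  have "t * G \<le> t" using G assms by (simp add: mult_left_le)
  moreover have "0 \<le> (1 - t) * G" "(1 - t) * G \<le> 1 - t" using G assms by (auto simp: mult_left_le)
  moreover have "qe t E = (if E \<le> 0 then t - t * G else t + (1 - t) * G)" unfolding qe_def G_def by simp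
  moreover have "0 \<le> t * G" using G assms by simp
  ultimately show ?thesis using assms by auto
qed

lemma reb_range: assumes "0 \<le> t" "t \<le> 1" shows "0 \<le> reb t E \<and> reb t E \<le> 1"
proof -
  have "reb 0 E \<le> reb t E" "reb t E \<le> reb 1 E" by (rule reb_mono; use assms in simp)+
  then show ?thesis by (simp add: reb_def)
qed



definition core :: "semantics \<Rightarrow> real \<Rightarrow> real \<Rightarrow> real \<Rightarrow> real \<Rightarrow> real \<Rightarrow> real" where
  "core sem t pa ps sa ss = (case sem of DFQuAD \<Rightarrow> dfq t pa ps | QE \<Rightarrow> qe t (ss - sa) | REB \<Rightarrow> reb t (ss - sa))"

lemma update_core: "update sem A Att Sp tau s a = core sem (tau a)
   (\<Prod>b\<in>attackers A Att a. 1 - s b) (\<Prod>b\<in>supporters A Sp a. 1 - s b)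
   (\<Sum>b\<in>attackers A Att a. s b) (\<Sum>b\<in>supporters A Sp a. s b)"
  by (cases sem) (simp_all add: core_def dfq_def qe_def reb_def Let_def)

lemma core_mono:
  assumes "0 \<le> t1" "t1 \<le> t2" "t2 \<le> 1" "0 \<le> pa1" "pa1 \<le> pa2" "pa2 \<le> 1"
    "0 \<le> ps2" "ps2 \<le> ps1" "ps1 \<le> 1" "sa2 \<le> sa1" "ss1 \<le> ss2"
  shows "core sem t1 pa1 ps1 sa1 ss1 \<le> core sem t2 pa2 ps2 sa2 ss2"
proof -
  have E: "ss1 - sa1 \<le> ss2 - sa2" using assms by simp
  show ?thesis
    using dfq_mono[OF assms(1-9)] qe_mono[OF assms(1-3) E] reb_mono[OF assms(1-3) E]
    by (cases sem) (simp_all add: core_def)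
qed

lemma core_range:
  assumes "0 \<le> t" "t \<le> 1" "0 \<le> pa" "pa \<le> 1" "0 \<le> ps" "ps \<le> 1"
  shows "0 \<le> core sem t pa ps sa ss \<and> core sem t pa ps sa ss \<le> 1"
  using dfq_range[OF assms] qe_range[OF assms(1,2), of "ss - sa"] reb_range[OF assms(1,2), of "ss - sa"]
  by (cases sem) (simp_all add: core_def)

lemma prod_range:
  assumes "finite S" "\<forall>b\<in>S. 0 \<le> s b \<and> s b \<le> 1"
  shows "0 \<le> (\<Prod>b\<in>S. 1 - (s b::real)) \<and> (\<Prod>b\<in>S. 1 - s b) \<le> 1"
  using assms by (auto intro!: prod_nonneg prod_le_1)

definition sol :: "semantics \<Rightarrow> 'a set \<Rightarrow> ('a \<times> 'a) set \<Rightarrow> ('a \<times> 'a) set \<Rightarrow> ('a \<Rightarrow> real) \<Rightarrow> ('a \<Rightarrow> real) \<Rightarrow> bool" where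
  "sol sem A Att Sp tau s \<longleftrightarrow> (\<forall>a\<in>A. s a = update sem A Att Sp tau s a) \<and> (\<forall>a. a \<notin> A \<longrightarrow> s a = 0)"

lemma update_cong:
  assumes "\<And>b. (b, a) \<in> Att \<union> Sp \<Longrightarrow> s1 b = s2 b"
  shows "update sem A Att Sp tau s1 a = update sem A Att Sp tau s2 a"
proof -
  have "(\<Prod>b\<in>attackers A Att a. 1 - s1 b) = (\<Prod>b\<in>attackers A Att a. 1 - s2 b)"
    by (rule prod.cong) (auto simp: attackers_def assms)
  moreover have "(\<Prod>b\<in>supporters A Sp a. 1 - s1 b) = (\<Prod>b\<in>supporters A Sp a. 1 - s2 b)"
    by (rule prod.cong) (auto simp: supporters_def assms)
  moreover have "(\<Sum>b\<in>attackers A Att a. s1 b) = (\<Sum>b\<in>attackers A Att a. s2 b)"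
    by (rule sum.cong) (auto simp: attackers_def assms)
  moreover have "(\<Sum>b\<in>supporters A Sp a. s1 b) = (\<Sum>b\<in>supporters A Sp a. s2 b)"
    by (rule sum.cong) (auto simp: supporters_def assms)
  ultimately show ?thesis unfolding update_core by simp
qed

lemma agree:
  assumes wf: "wf (Att1 \<union> Sp1)"
    and s1: "sol sem A Att1 Sp1 tau1 s1" and s2: "sol sem A Att2 Sp2 tau2 s2"
    and closed: "\<forall>x\<in>X. \<forall>y. (y, x) \<in> Att1 \<union> Sp1 \<longrightarrow> y \<in> X"
    and XA: "X \<subseteq> A"
    and same: "\<forall>x\<in>X. \<forall>y. ((y, x) \<in> Att1 \<longleftrightarrow> (y, x) \<in> Att2) \<and> ((y, x) \<in> Sp1 \<longleftrightarrow> (y, x) \<in> Sp2)"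
    and tau: "\<forall>x\<in>X. tau1 x = tau2 x"
  shows "\<forall>x\<in>X. s1 x = s2 x"
proof -
  have "x \<in> X \<longrightarrow> s1 x = s2 x" for x
  using wf proof (induction x rule: wf_induct_rule)
    case (less x)
    show ?case
    proof
      assume xX: "x \<in> X"
      have ea: "attackers A Att1 x = attackers A Att2 x" using same xX by (auto simp: attackers_def)
      have es: "supporters A Sp1 x = supporters A Sp2 x" using same xX by (auto simp: supporters_def)
      have "s1 x = update sem A Att1 Sp1 tau1 s1 x" using s1 xX XA by (auto simp: sol_def)
      also have "\<dots> = update sem A Att1 Sp1 tau1 s2 x"
        by (rule update_cong) (use less closed xX in blast)
      also have "\<dots> = update sem A Att2 Sp2 tau2 s2 x"
        unfolding update_core ea es using tau xX by simp
      also have "\<dots> = s2 x" using s2 xX XA by (auto simp: sol_def)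
      finally show "s1 x = s2 x" .
    qed
  qed
  then show ?thesis by blast
qed

lemma qbaf_wf: assumes "acyclic_qbaf A Att Sp tau" shows "wf (Att \<union> Sp)"
proof -
  have "finite (A \<times> A)" using assms by (simp add: acyclic_qbaf_def qbaf_def)
  then have "finite (Att \<union> Sp)" using assms
    by (auto simp: acyclic_qbaf_def qbaf_def intro: finite_subset)
  then show ?thesis using assms by (auto simp: acyclic_qbaf_def intro: finite_acyclic_wf)
qed

lemma sol_exists: assumes "acyclic_qbaf A Att Sp tau" shows "\<exists>s. sol sem A Att Sp tau s"
proof -
  let ?r = "Att \<union> Sp"
  define F where "F = (\<lambda>f x. if x \<in> A then update sem A Att Sp tau f x else 0)"
  define s where "s = wfrec ?r F"
  have wf: "wf ?r" using qbaf_wf[OF assms] .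
  have "s x = F (cut s ?r x) x" for x unfolding s_def by (rule wfrec[OF wf])
  moreover have "update sem A Att Sp tau (cut s ?r x) x = update sem A Att Sp tau s x" for x
    by (rule update_cong) (simp add: cut_apply)
  ultimately have "s x = (if x \<in> A then update sem A Att Sp tau s x else 0)" for x
    unfolding F_def by simp
  then have "sol sem A Att Sp tau s" unfolding sol_def by (metis (full_types))
  then show ?thesis by blast
qed

lemma strength_sol: assumes "acyclic_qbaf A Att Sp tau"
  shows "sol sem A Att Sp tau (strength sem A Att Sp tau)"
proof -
  obtain s where s: "sol sem A Att Sp tau s" using sol_exists[OF assms] by blast
  have uniq: "s' = s" if "sol sem A Att Sp tau s'" for s'
  proof
    fix x
    show "s' x = s x"
    proof (cases "x \<in> A")
      case True
      have "\<forall>x\<in>A. s' x = s x"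
        by (rule agree[OF qbaf_wf[OF assms] that s]) (use assms in \<open>auto simp: acyclic_qbaf_def qbaf_def\<close>)
      then show ?thesis using True by blast
    next
      case False then show ?thesis using s that by (simp add: sol_def)
    qed
  qed
  have "strength sem A Att Sp tau = (THE s. sol sem A Att Sp tau s)"
    unfolding strength_def sol_def by simp
  also have "\<dots> = s" using s uniq by (rule the_equality)
  finally show ?thesis using s by simp
qed

lemma sol_range:
  assumes q: "acyclic_qbaf A Att Sp tau" and s: "sol sem A Att Sp tau s"
  shows "\<forall>x\<in>A. 0 \<le> s x \<and> s x \<le> 1"
proof -
  have fin: "finite A" and sub: "Att \<subseteq> A \<times> A" "Sp \<subseteq> A \<times> A" and tr: "\<forall>a\<in>A. 0 \<le> tau a \<and> tau a \<le> 1"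
    using q by (auto simp: acyclic_qbaf_def qbaf_def)
  have "x \<in> A \<longrightarrow> 0 \<le> s x \<and> s x \<le> 1" for x
  using qbaf_wf[OF q] proof (induction x rule: wf_induct_rule)
    case (less x)
    show ?case
    proof
      assume xA: "x \<in> A"
      have fa: "finite (attackers A Att x)" "finite (supporters A Sp x)"
        using fin by (auto simp: attackers_def supporters_def)
      have "\<forall>b\<in>attackers A Att x. 0 \<le> s b \<and> s b \<le> 1"
        using less by (auto simp: attackers_def)
      moreover have "\<forall>b\<in>supporters A Sp x. 0 \<le> s b \<and> s b \<le> 1"
        using less by (auto simp: supporters_def)
      ultimately have "0 \<le> update sem A Att Sp tau s x \<and> update sem A Att Sp tau s x \<le> 1"
        unfolding update_core using fa tr xA prod_range[OF fa(1)] prod_range[OF fa(2)]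
        by (intro core_range) auto
      then show "0 \<le> s x \<and> s x \<le> 1" using s xA by (simp add: sol_def)
    qed
  qed
  then show ?thesis by blast
qed



lemma core_pw:
  assumes "finite SA" "finite SS" "0 \<le> t1" "t1 \<le> t2" "t2 \<le> 1"
    "\<forall>b\<in>SA. 0 \<le> s2 b \<and> s2 b \<le> s1 b \<and> s1 b \<le> 1"
    "\<forall>b\<in>SS. 0 \<le> s1 b \<and> s1 b \<le> s2 b \<and> s2 b \<le> 1"
  shows "core sem t1 (\<Prod>b\<in>SA. 1 - s1 b) (\<Prod>b\<in>SS. 1 - s1 b) (\<Sum>b\<in>SA. s1 b) (\<Sum>b\<in>SS. s1 b)
       \<le> core sem t2 (\<Prod>b\<in>SA. 1 - s2 b) (\<Prod>b\<in>SS. 1 - s2 b) (\<Sum>b\<in>SA. s2 b) (\<Sum>b\<in>SS. s2 b)"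
proof (rule core_mono)
  have r1: "\<forall>b\<in>SA. 0 \<le> s1 b \<and> s1 b \<le> 1" "\<forall>b\<in>SS. 0 \<le> s1 b \<and> s1 b \<le> 1"
   "\<forall>b\<in>SA. 0 \<le> s2 b \<and> s2 b \<le> 1" "\<forall>b\<in>SS. 0 \<le> s2 b \<and> s2 b \<le> 1" using assms by force+
  show "0 \<le> (\<Prod>b\<in>SA. 1 - s1 b)" "(\<Prod>b\<in>SA. 1 - s2 b) \<le> 1"
    "0 \<le> (\<Prod>b\<in>SS. 1 - s2 b)" "(\<Prod>b\<in>SS. 1 - s1 b) \<le> 1"
    using prod_range[OF assms(1) r1(1)] prod_range[OF assms(2) r1(2)]
      prod_range[OF assms(1) r1(3)] prod_range[OF assms(2) r1(4)] by auto
  show "(\<Prod>b\<in>SA. 1 - s1 b) \<le> (\<Prod>b\<in>SA. 1 - s2 b)"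
    by (rule prod_mono) (use assms(6) in auto)
  show "(\<Prod>b\<in>SS. 1 - s2 b) \<le> (\<Prod>b\<in>SS. 1 - s1 b)"
    by (rule prod_mono) (use assms(7) in auto)
  show "(\<Sum>b\<in>SA. s2 b) \<le> (\<Sum>b\<in>SA. s1 b)" by (rule sum_mono) (use assms(6) in auto)
  show "(\<Sum>b\<in>SS. s1 b) \<le> (\<Sum>b\<in>SS. s2 b)" by (rule sum_mono) (use assms(7) in auto)
qed (use assms in auto)

lemma remove_att:
  assumes "finite T" "b0 \<notin> T" "\<forall>b\<in>insert b0 T. 0 \<le> s b \<and> s b \<le> 1" "0 \<le> t" "t \<le> 1" "0 \<le> ps" "ps \<le> 1"
  shows "core sem t (\<Prod>b\<in>insert b0 T. 1 - s b) ps (\<Sum>b\<in>insert b0 T. s b) ss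
       \<le> core sem t (\<Prod>b\<in>T. 1 - s b) ps (\<Sum>b\<in>T. s b) ss"
proof -
  let ?P = "\<Prod>b\<in>T. 1 - s b"
  have P: "0 \<le> ?P" "?P \<le> 1" using prod_range[OF assms(1), of s] assms(3) by auto
  have sb: "0 \<le> s b0" "s b0 \<le> 1" using assms(3) by auto
  have "(1 - s b0) * ?P \<le> 1 * ?P" using P sb by (intro mult_right_mono) auto
  then show ?thesis using assms P sb by (simp add: prod.insert sum.insert, intro core_mono) auto
qed

lemma remove_sup:
  assumes "finite T" "b0 \<notin> T" "\<forall>b\<in>insert b0 T. 0 \<le> s b \<and> s b \<le> 1" "0 \<le> t" "t \<le> 1" "0 \<le> pa" "pa \<le> 1"
  shows "core sem t pa (\<Prod>b\<in>T. 1 - s b) sa (\<Sum>b\<in>T. s b)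
       \<le> core sem t pa (\<Prod>b\<in>insert b0 T. 1 - s b) sa (\<Sum>b\<in>insert b0 T. s b)"
proof -
  let ?P = "\<Prod>b\<in>T. 1 - s b"
  have P: "0 \<le> ?P" "?P \<le> 1" using prod_range[OF assms(1), of s] assms(3) by auto
  have sb: "0 \<le> s b0" "s b0 \<le> 1" using assms(3) by auto
  have "(1 - s b0) * ?P \<le> 1 * ?P" using P sb by (intro mult_right_mono) auto
  moreover have "0 \<le> (1 - s b0) * ?P" using P sb by simp
  ultimately show ?thesis using assms P sb by (simp add: prod.insert sum.insert, intro core_mono) auto
qed



theorem proposition1:
  fixes sem :: semantics
    and A :: "'a set" and Att Sp :: "('a \<times> 'a) set" and tau tau' :: "'a \<Rightarrow> real"
    and \<alpha> \<beta> :: 'a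
  assumes "acyclic_qbaf A Att Sp tau"
    and "\<alpha> \<in> A" and "\<beta> \<in> A" and "\<alpha> \<noteq> \<beta>"
    and "{e \<in> Att \<union> Sp. fst e = \<beta>} = {(\<beta>, \<alpha>)}"
    and "\<forall>a\<in>A. 0 \<le> tau' a \<and> tau' a \<le> 1"
  shows "((\<beta>, \<alpha>) \<in> Att \<longrightarrow>
            strength sem A Att Sp tau \<alpha>
              \<le> strength sem A (Att \<inter> ((Att \<union> Sp) - {(\<beta>, \<alpha>)}))
                                (Sp \<inter> ((Att \<union> Sp) - {(\<beta>, \<alpha>)})) tau \<alpha>)
       \<and> ((\<beta>, \<alpha>) \<in> Sp \<longrightarrow>
            strength sem A Att Sp tau \<alpha>
              \<ge> strength sem A (Att \<inter> ((Att \<union> Sp) - {(\<beta>, \<alpha>)}))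
                                (Sp \<inter> ((Att \<union> Sp) - {(\<beta>, \<alpha>)})) tau \<alpha>)
       \<and> ((\<beta>, \<alpha>) \<in> Att \<and> tau \<beta> \<le> tau' \<beta> \<and> (\<forall>\<gamma>\<in>A - {\<beta>}. tau \<gamma> = tau' \<gamma>) \<longrightarrow>
            strength sem A Att Sp tau \<alpha> \<ge> strength sem A Att Sp tau' \<alpha>)
       \<and> ((\<beta>, \<alpha>) \<in> Sp \<and> tau \<beta> \<le> tau' \<beta> \<and> (\<forall>\<gamma>\<in>A - {\<beta>}. tau \<gamma> = tau' \<gamma>) \<longrightarrow>
            strength sem A Att Sp tau \<alpha> \<le> strength sem A Att Sp tau' \<alpha>)"
proof -
  let ?G = "Att \<union> Sp"
  note q = assms(1)
  have fin: "finite A" and subA: "Att \<subseteq> A \<times> A" and subS: "Sp \<subseteq> A \<times> A"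
    and disj: "Att \<inter> Sp = {}" and tr: "\<forall>a\<in>A. 0 \<le> tau a \<and> tau a \<le> 1" and acy: "acyclic ?G"
    using q by (auto simp: acyclic_qbaf_def qbaf_def)
  have wf: "wf ?G" by (rule qbaf_wf[OF q])
  have out: "y = \<alpha>" if "(\<beta>, y) \<in> ?G" for y
  proof -
    have "(\<beta>, y) \<in> {e \<in> ?G. fst e = \<beta>}" using that by simp
    then show ?thesis unfolding assms(5) by simp
  qed
  have "(\<beta>, \<alpha>) \<in> {e \<in> ?G. fst e = \<beta>}" unfolding assms(5) by simp
  then have ba: "(\<beta>, \<alpha>) \<in> ?G" by simp
  have nocyc: "(x, x) \<notin> ?G\<^sup>+" for x using acy by (simp add: acyclic_def)
  have noback: "(x, y) \<notin> ?G\<^sup>*" if "(y, x) \<in> ?G" for x y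
    using nocyc[of x] that by (meson rtrancl_into_trancl1)
  have inA: "y \<in> A" "x \<in> A" if "(y, x) \<in> ?G" for x y using that subA subS by auto
  define s where "s = strength sem A Att Sp tau"
  have ssol: "sol sem A Att Sp tau s" using strength_sol[OF q] s_def by simp
  have srange: "\<forall>x\<in>A. 0 \<le> s x \<and> s x \<le> 1" by (rule sol_range[OF q ssol])
  have finatt: "finite (attackers A Att x)" "finite (supporters A Sp x)" for x
    using fin by (auto simp: attackers_def supporters_def)

  define Att2 where "Att2 = Att \<inter> (?G - {(\<beta>, \<alpha>)})"
  define Sp2 where "Sp2 = Sp \<inter> (?G - {(\<beta>, \<alpha>)})"
  have "acyclic (Att2 \<union> Sp2)" by (rule acyclic_subset[OF acy]) (auto simp: Att2_def Sp2_def)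
  then have q2: "acyclic_qbaf A Att2 Sp2 tau"
    unfolding acyclic_qbaf_def qbaf_def
    using fin subA subS disj tr by (auto simp: Att2_def Sp2_def)
  define s2 where "s2 = strength sem A Att2 Sp2 tau"
  have s2sol: "sol sem A Att2 Sp2 tau s2" using strength_sol[OF q2] s2_def by simp
  define X where "X = {x \<in> A. (\<alpha>, x) \<notin> ?G\<^sup>*}"
  have agX: "\<forall>x\<in>X. s x = s2 x"
  proof (rule agree[OF wf ssol s2sol])
    show "\<forall>x\<in>X. \<forall>y. (y, x) \<in> ?G \<longrightarrow> y \<in> X"
    proof (intro ballI allI impI)
      fix x y assume x: "x \<in> X" and yx: "(y, x) \<in> ?G"
      have "(\<alpha>, y) \<notin> ?G\<^sup>*"
      proof
        assume "(\<alpha>, y) \<in> ?G\<^sup>*"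
        then have "(\<alpha>, x) \<in> ?G\<^sup>*" using yx by (rule rtrancl_into_rtrancl)
        then show False using x by (simp add: X_def)
      qed
      then show "y \<in> X" using inA[OF yx] by (simp add: X_def)
    qed
    show "X \<subseteq> A" by (auto simp: X_def)
    show "\<forall>x\<in>X. \<forall>y. ((y, x) \<in> Att \<longleftrightarrow> (y, x) \<in> Att2) \<and> ((y, x) \<in> Sp \<longleftrightarrow> (y, x) \<in> Sp2)"
    proof (intro ballI allI)
      fix x y assume "x \<in> X"
      then have "x \<noteq> \<alpha>" by (auto simp: X_def)
      then show "((y, x) \<in> Att \<longleftrightarrow> (y, x) \<in> Att2) \<and> ((y, x) \<in> Sp \<longleftrightarrow> (y, x) \<in> Sp2)"
        by (auto simp: Att2_def Sp2_def)
    qed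
    show "\<forall>x\<in>X. tau x = tau x" by simp
  qed
  have parX: "y \<in> X" if "(y, \<alpha>) \<in> ?G" for y
    using noback[OF that] inA[OF that] by (simp add: X_def)
  have sa: "s \<alpha> = update sem A Att Sp tau s \<alpha>" using ssol assms(2) by (simp add: sol_def)
  have s2a: "s2 \<alpha> = update sem A Att2 Sp2 tau s2 \<alpha>" using s2sol assms(2) by (simp add: sol_def)
  have eq2: "s2 b = s b" if "(b, \<alpha>) \<in> ?G" for b using parX[OF that] agX by simp
  have ta: "0 \<le> tau \<alpha>" "tau \<alpha> \<le> 1" using tr assms(2) by auto

  have P1: "s \<alpha> \<le> s2 \<alpha>" if att: "(\<beta>, \<alpha>) \<in> Att"
  proof -
    let ?T = "attackers A Att2 \<alpha>"
    have e1: "attackers A Att \<alpha> = insert \<beta> ?T" "\<beta> \<notin> ?T"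
      using att assms(3) by (auto simp: attackers_def Att2_def)
    have e2: "supporters A Sp2 \<alpha> = supporters A Sp \<alpha>"
      using att disj by (auto simp: supporters_def Sp2_def)
    have Tsub: "b \<in> ?T \<Longrightarrow> (b, \<alpha>) \<in> ?G" for b by (auto simp: attackers_def Att2_def)
    have c1: "(\<Prod>b\<in>?T. 1 - s2 b) = (\<Prod>b\<in>?T. 1 - s b)" "(\<Sum>b\<in>?T. s2 b) = (\<Sum>b\<in>?T. s b)"
      using eq2 Tsub by (auto intro!: prod.cong sum.cong)
    have c2: "(\<Prod>b\<in>supporters A Sp \<alpha>. 1 - s2 b) = (\<Prod>b\<in>supporters A Sp \<alpha>. 1 - s b)"
       "(\<Sum>b\<in>supporters A Sp \<alpha>. s2 b) = (\<Sum>b\<in>supporters A Sp \<alpha>. s b)"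
      using eq2 by (auto simp: supporters_def intro!: prod.cong sum.cong)
    have r: "\<forall>b\<in>insert \<beta> ?T. 0 \<le> s b \<and> s b \<le> 1" using srange assms(3) by (auto simp: attackers_def)
    have PS: "0 \<le> (\<Prod>b\<in>supporters A Sp \<alpha>. 1 - s b)" "(\<Prod>b\<in>supporters A Sp \<alpha>. 1 - s b) \<le> 1"
      using prod_range[OF finatt(2)[of \<alpha>], of s] srange by (auto simp: supporters_def)
    have fT: "finite ?T" using fin by (auto simp: attackers_def)
    show ?thesis
      unfolding sa s2a update_core e1(1) e2 c1 c2
      by (rule remove_att[OF fT e1(2) r ta PS])
  qed

  have P2: "s2 \<alpha> \<le> s \<alpha>" if sp: "(\<beta>, \<alpha>) \<in> Sp"
  proof -
    let ?T = "supporters A Sp2 \<alpha>"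
    have e1: "supporters A Sp \<alpha> = insert \<beta> ?T" "\<beta> \<notin> ?T"
      using sp assms(3) by (auto simp: supporters_def Sp2_def)
    have e2: "attackers A Att2 \<alpha> = attackers A Att \<alpha>"
      using sp disj by (auto simp: attackers_def Att2_def)
    have Tsub: "b \<in> ?T \<Longrightarrow> (b, \<alpha>) \<in> ?G" for b by (auto simp: supporters_def Sp2_def)
    have c1: "(\<Prod>b\<in>?T. 1 - s2 b) = (\<Prod>b\<in>?T. 1 - s b)" "(\<Sum>b\<in>?T. s2 b) = (\<Sum>b\<in>?T. s b)"
      using eq2 Tsub by (auto intro!: prod.cong sum.cong)
    have c2: "(\<Prod>b\<in>attackers A Att \<alpha>. 1 - s2 b) = (\<Prod>b\<in>attackers A Att \<alpha>. 1 - s b)"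
       "(\<Sum>b\<in>attackers A Att \<alpha>. s2 b) = (\<Sum>b\<in>attackers A Att \<alpha>. s b)"
      using eq2 by (auto simp: attackers_def intro!: prod.cong sum.cong)
    have r: "\<forall>b\<in>insert \<beta> ?T. 0 \<le> s b \<and> s b \<le> 1" using srange assms(3) by (auto simp: supporters_def)
    have PA: "0 \<le> (\<Prod>b\<in>attackers A Att \<alpha>. 1 - s b)" "(\<Prod>b\<in>attackers A Att \<alpha>. 1 - s b) \<le> 1"
      using prod_range[OF finatt(1)[of \<alpha>], of s] srange by (auto simp: attackers_def)
    have fT: "finite ?T" using fin by (auto simp: supporters_def)
    show ?thesis
      unfolding sa s2a update_core e1(1) e2 c1 c2
      by (rule remove_sup[OF fT e1(2) r ta PA])
  qed

  have P34: "((\<beta>, \<alpha>) \<in> Att \<longrightarrow> s' \<alpha> \<le> s \<alpha>) \<and> ((\<beta>, \<alpha>) \<in> Sp \<longrightarrow> s \<alpha> \<le> s' \<alpha>)"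
    if tb: "tau \<beta> \<le> tau' \<beta>" and teq: "\<forall>\<gamma>\<in>A - {\<beta>}. tau \<gamma> = tau' \<gamma>"
      and s'def: "s' = strength sem A Att Sp tau'" for s'
  proof -
    have q': "acyclic_qbaf A Att Sp tau'" using q assms(6) by (auto simp: acyclic_qbaf_def qbaf_def)
    have s'sol: "sol sem A Att Sp tau' s'" using strength_sol[OF q'] s'def by simp
    have s'range: "\<forall>x\<in>A. 0 \<le> s' x \<and> s' x \<le> 1" by (rule sol_range[OF q' s'sol])
    define Y where "Y = {x \<in> A. (\<beta>, x) \<notin> ?G\<^sup>*}"
    have agY: "\<forall>x\<in>Y. s x = s' x"
    proof (rule agree[OF wf ssol s'sol])
      show "\<forall>x\<in>Y. \<forall>y. (y, x) \<in> ?G \<longrightarrow> y \<in> Y"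
      proof (intro ballI allI impI)
        fix x y assume x: "x \<in> Y" and yx: "(y, x) \<in> ?G"
        have "(\<beta>, y) \<notin> ?G\<^sup>*"
        proof
          assume "(\<beta>, y) \<in> ?G\<^sup>*"
          then have "(\<beta>, x) \<in> ?G\<^sup>*" using yx by (rule rtrancl_into_rtrancl)
          then show False using x by (simp add: Y_def)
        qed
        then show "y \<in> Y" using inA[OF yx] by (simp add: Y_def)
      qed
      show "Y \<subseteq> A" by (auto simp: Y_def)
      show "\<forall>x\<in>Y. tau x = tau' x" using teq by (auto simp: Y_def)
      show "\<forall>x\<in>Y. \<forall>y. ((y, x) \<in> Att \<longleftrightarrow> (y, x) \<in> Att) \<and> ((y, x) \<in> Sp \<longleftrightarrow> (y, x) \<in> Sp)" by simp
    qed
    have parB: "s' y = s y" if "(y, \<beta>) \<in> ?G" for y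
      using noback[OF that] inA[OF that] agY by (simp add: Y_def)
    have parA: "s' y = s y" if "(y, \<alpha>) \<in> ?G" "y \<noteq> \<beta>" for y
    proof -
      have "(\<beta>, y) \<notin> ?G\<^sup>*"
      proof
        assume "(\<beta>, y) \<in> ?G\<^sup>*"
        then have "(\<beta>, y) \<in> ?G\<^sup>+" using that(2) by (metis rtranclD)
        then obtain c where "(\<beta>, c) \<in> ?G" "(c, y) \<in> ?G\<^sup>*" by (meson tranclD)
        then have "(\<alpha>, y) \<in> ?G\<^sup>*" using out by blast
        then show False using noback[OF that(1)] by simp
      qed
      then show ?thesis using inA[OF that(1)] agY by (simp add: Y_def)
    qed
    have sbb: "s \<beta> \<le> s' \<beta>"
    proof -
      have "s \<beta> = update sem A Att Sp tau s \<beta>" using ssol assms(3) by (simp add: sol_def)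
      also have "\<dots> \<le> update sem A Att Sp tau' s' \<beta>"
        unfolding update_core
        by (rule core_pw[OF finatt]) (use tr assms(3,6) tb parB srange in \<open>auto simp: attackers_def supporters_def\<close>)
      also have "\<dots> = s' \<beta>" using s'sol assms(3) by (simp add: sol_def)
      finally show ?thesis .
    qed
    have le1: "s b \<le> s' b" if "(b, \<alpha>) \<in> ?G" for b
      using sbb parA[OF that] by (cases "b = \<beta>") auto
    have le2: "s' b \<le> s b" if "(b, \<alpha>) \<in> ?G" "b \<noteq> \<beta>" for b
      using parA[OF that] by simp
    have tae: "tau' \<alpha> = tau \<alpha>" using teq assms(2,4) by auto
    have sa': "s' \<alpha> = update sem A Att Sp tau' s' \<alpha>" using s'sol assms(2) by (simp add: sol_def)
    show ?thesis
    proof (intro conjI impI)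
      assume att: "(\<beta>, \<alpha>) \<in> Att"
      then have nsp: "(\<beta>, \<alpha>) \<notin> Sp" using disj by auto
      show "s' \<alpha> \<le> s \<alpha>"
        unfolding sa sa' update_core tae
        by (rule core_pw[OF finatt]) (use ta le1 le2 srange s'range nsp in \<open>auto simp: attackers_def supporters_def\<close>)
    next
      assume sp: "(\<beta>, \<alpha>) \<in> Sp"
      then have natt: "(\<beta>, \<alpha>) \<notin> Att" using disj by auto
      show "s \<alpha> \<le> s' \<alpha>"
        unfolding sa sa' update_core tae
        by (rule core_pw[OF finatt]) (use ta le1 le2 srange s'range natt in \<open>auto simp: attackers_def supporters_def\<close>)
    qed
  qed
  show ?thesis
    using P1 P2 P34[OF _ _ refl] unfolding s_def s2_def Att2_def Sp2_def by auto
qed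

end
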